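(* For every simple type $A$, the topological space $\widehat{\Lambda}(A)$ of profinite $\lambda$-terms of type $A$ is (homeomorphic to) the Stone dual space of the Boolean algebra $\mathrm{Reg}(A)$. In particular, $\mathrm{Reg}(A)$ is isomorphic to the Boolean algebra of clopen subsets of $\widehat{\Lambda}(A)$.
   Context: Simple types are generated from a base type $o$ by $\Rightarrow$; $\Lambda(A)$ is the set of closed simply typed $\lambda$-terms of type $A$ modulo $\beta\eta$. For a finite set $Q$: $[\![o]\!]_Q = Q$, $[\![A\Rightarrow B]\!]_Q$ = all functions $[\![A]\!]_Q \to [\![B]\!]_Q$, $[\![M]\!]_Q$ the standard interpretation, $D_Q(A) = \{[\![M]\!]_Q : M \in \Lambda(A)\}$. $\mathrm{Reg}_Q(A) = \{\{M : [\![M]\!]_Q \in F\} : F \subseteq [\![A]\!]_Q\}$ and $\mathrm{Reg}(A) = \bigcup_{Q\text{ finite}} \mathrm{Reg}_Q(A) \subseteq \wp(\Lambda(A))$, which is a Boolean algebra. Logical relations: for $R \subseteq Q\times Q'$, $[\![o]\!]_R = R$, $[\![A\Rightarrow B]\!]_R = \{(g,h) : \forall (x,y)\in[\![A]\!]_R,\ (g(x),h(y))\in[\![B]\!]_R\}$. A partial surjection $f \colon Q \twoheadrightarrow Q'$ is a relation that is the graph of a partial function surjective onto $Q'$. A profinite $\lambda$-term of type $A$ is a family $\theta=(\theta_Q)$, $Q$ ranging over finite sets, with $\theta_Q \in D_Q(A)$ and $(\theta_Q,\theta_{Q'}) \in [\![A]\!]_f$ for every partial surjection $f\colon Q\twoheadrightarrow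 Q'$. $\widehat{\Lambda}(A)$ is the set of these, with topology having basis $U_{Q,q} = \{\theta : \theta_Q = q\}$ for $Q$ finite and $q \in D_Q(A)$. *)

theory Defs
  imports "HOL-Analysis.Analysis" "HOL-Library.FSet"
begin

datatype ty = TO | TArr ty ty

text \<open>Church-style raw lambda-terms with de Bruijn indices.\<close>
datatype lterm = LVar nat | LApp lterm lterm | LAbs ty lterm

primrec lift :: "lterm \<Rightarrow> nat \<Rightarrow> lterm" where
  "lift (LVar i) k = (if i < k then LVar i else LVar (Suc i))"
| "lift (LApp s t) k = LApp (lift s k) (lift t k)"
| "lift (LAbs T s) k = LAbs T (lift s (Suc k))"

primrec subst :: "lterm \<Rightarrow> nat \<Rightarrow> lterm \<Rightarrow> lterm" where
  "subst (LVar i) k u = (if i < k then LVar i else if i = k then u else LVar (i - 1))"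
| "subst (LApp s t) k u = LApp (subst s k u) (subst t k u)"
| "subst (LAbs T s) k u = LAbs T (subst s (Suc k) (lift u 0))"

inductive be_step :: "lterm \<Rightarrow> lterm \<Rightarrow> bool" where
  beta: "be_step (LApp (LAbs T s) t) (subst s 0 t)"
| eta: "be_step (LAbs T (LApp (lift s 0) (LVar 0))) s"
| appL: "be_step s s' \<Longrightarrow> be_step (LApp s t) (LApp s' t)"
| appR: "be_step t t' \<Longrightarrow> be_step (LApp s t) (LApp s t')"
| abs: "be_step s s' \<Longrightarrow> be_step (LAbs T s) (LAbs T s')"

inductive typing :: "ty list \<Rightarrow> lterm \<Rightarrow> ty \<Rightarrow> bool" where
  tvar: "i < length \<Gamma> \<Longrightarrow> typing \<Gamma> (LVar i) (\<Gamma> ! i)"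
| tapp: "typing \<Gamma> s (TArr T U) \<Longrightarrow> typing \<Gamma> t T \<Longrightarrow> typing \<Gamma> (LApp s t) U"
| tabs: "typing (T # \<Gamma>) s U \<Longrightarrow> typing \<Gamma> (LAbs T s) (TArr T U)"

definition Terms :: "ty \<Rightarrow> lterm set" where
  "Terms A = {M. typing [] M A}"

definition conv :: "ty \<Rightarrow> lterm rel" where
  "conv A = (let r = {(M, N). M \<in> Terms A \<and> N \<in> Terms A \<and> be_step M N}
             in (r \<union> r\<inverse>)\<^sup>*)"

definition Lam :: "ty \<Rightarrow> lterm set set" where
  "Lam A = Terms A // conv A"

text \<open>Semantic values: base elements (elements of Q, Q a finite set of naturals)
  and finite functions given by their graphs.\<close>
datatype sem = Base nat | Fn "(sem \<times> sem) fset"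

fun app :: "sem \<Rightarrow> sem \<Rightarrow> sem" where
  "app (Fn g) x = (THE y. (x, y) |\<in>| g)"
| "app (Base n) x = undefined"

primrec interp :: "nat set \<Rightarrow> ty \<Rightarrow> sem set" where
  "interp Q TO = Base ` Q"
| "interp Q (TArr A B) =
     {Fn g | g. fset g \<subseteq> interp Q A \<times> interp Q B \<and>
                (\<forall>x\<in>interp Q A. \<exists>!y. (x, y) \<in> fset g)}"

fun eval :: "nat set \<Rightarrow> sem list \<Rightarrow> lterm \<Rightarrow> sem" where
  "eval Q \<rho> (LVar i) = \<rho> ! i"
| "eval Q \<rho> (LApp s t) = app (eval Q \<rho> s) (eval Q \<rho> t)"
| "eval Q \<rho> (LAbs T s) = Fn (Abs_fset ((\<lambda>x. (x, eval Q (x # \<rho>) s)) ` interp Q T))"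

definition den :: "nat set \<Rightarrow> lterm set \<Rightarrow> sem" where
  "den Q c = eval Q [] (SOME M. M \<in> c)"

definition D :: "nat set \<Rightarrow> ty \<Rightarrow> sem set" where
  "D Q A = den Q ` Lam A"

definition Reg_Q :: "nat set \<Rightarrow> ty \<Rightarrow> lterm set set set" where
  "Reg_Q Q A = {{c \<in> Lam A. den Q c \<in> F} | F. F \<subseteq> interp Q A}"

definition Reg :: "ty \<Rightarrow> lterm set set set" where
  "Reg A = (\<Union>Q\<in>{Q. finite Q}. Reg_Q Q A)"

primrec lrel :: "nat set \<Rightarrow> nat set \<Rightarrow> (nat \<times> nat) set \<Rightarrow> ty \<Rightarrow> (sem \<times> sem) set" where
  "lrel Q Q' R TO = {(Base a, Base b) | a b. (a, b) \<in> R}"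
| "lrel Q Q' R (TArr A B) =
     {(g, h). g \<in> interp Q (TArr A B) \<and> h \<in> interp Q' (TArr A B) \<and>
              (\<forall>(x, y)\<in>lrel Q Q' R A. (app g x, app h y) \<in> lrel Q Q' R B)}"

text \<open>Partial surjection \<open>f : Q \<twoheadrightarrow> Q'\<close>: graph of a partial function from Q onto Q'.\<close>
definition psurj :: "nat set \<Rightarrow> nat set \<Rightarrow> (nat \<times> nat) set \<Rightarrow> bool" where
  "psurj Q Q' f \<longleftrightarrow> f \<subseteq> Q \<times> Q' \<and> single_valued f \<and> Range f = Q'"

text \<open>Profinite lambda-terms: families indexed by finite sets Q (finite subsets of nat,
  which represent all finite sets up to bijection); extensional outside finite sets.\<close>
definition Profin :: "ty \<Rightarrow> (nat set \<Rightarrow> sem) set" where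
  "Profin A = {\<theta>. (\<forall>Q. finite Q \<longrightarrow> \<theta> Q \<in> D Q A) \<and>
                  (\<forall>Q. \<not> finite Q \<longrightarrow> \<theta> Q = undefined) \<and>
                  (\<forall>Q Q' f. finite Q \<longrightarrow> finite Q' \<longrightarrow> psurj Q Q' f \<longrightarrow>
                       (\<theta> Q, \<theta> Q') \<in> lrel Q Q' f A)}"

definition profin_top :: "ty \<Rightarrow> (nat set \<Rightarrow> sem) topology" where
  "profin_top A = topology_generated_by
     {{\<theta> \<in> Profin A. \<theta> Q = q} | Q q. finite Q \<and> q \<in> D Q A}"

definition ultrafilter_on :: "'a set \<Rightarrow> 'a set set \<Rightarrow> 'a set set \<Rightarrow> bool" where
  "ultrafilter_on X B U \<longleftrightarrow> U \<subseteq> B \<and> X \<in> U \<and> {} \<notin> U \<and>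
     (\<forall>a\<in>U. \<forall>b\<in>B. a \<subseteq> b \<longrightarrow> b \<in> U) \<and>
     (\<forall>a\<in>U. \<forall>b\<in>U. a \<inter> b \<in> U) \<and>
     (\<forall>a\<in>B. a \<in> U \<or> X - a \<in> U)"

definition stone_space :: "'a set \<Rightarrow> 'a set set \<Rightarrow> 'a set set topology" where
  "stone_space X B = topology_generated_by
     {{U. ultrafilter_on X B U \<and> a \<in> U} | a. a \<in> B}"

end

theory Submission
  imports Defs
begin



lemma interp_finite: "finite Q \<Longrightarrow> finite (interp Q A)"
proof (induction A)
  case TO then show ?case by simp
next
  case (TArr A B)
  have "interp Q (TArr A B) \<subseteq> (\<lambda>g. Fn (Abs_fset g)) ` Pow (interp Q A \<times> interp Q B)"
  proof
    fix x assume "x \<in> interp Q (TArr A B)"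
    then obtain g where g: "x = Fn g" "fset g \<subseteq> interp Q A \<times> interp Q B" by auto
    then show "x \<in> (\<lambda>g. Fn (Abs_fset g)) ` Pow (interp Q A \<times> interp Q B)"
      by (intro image_eqI[of _ _ "fset g"]) (auto simp: fset_inverse)
  qed
  moreover have "finite (Pow (interp Q A \<times> interp Q B))" using TArr by simp
  ultimately show ?case by (meson finite_surj)
qed

definition mkfun :: "nat set \<Rightarrow> ty \<Rightarrow> (sem \<Rightarrow> sem) \<Rightarrow> sem" where
  "mkfun Q T \<phi> = Fn (Abs_fset ((\<lambda>x. (x, \<phi> x)) ` interp Q T))"

lemma eval_LAbs: "eval Q \<rho> (LAbs T s) = mkfun Q T (\<lambda>x. eval Q (x # \<rho>) s)"
  by (simp add: mkfun_def)

lemma fset_mkfun: "finite Q \<Longrightarrow> fset (Abs_fset ((\<lambda>x. (x, \<phi> x)) ` interp Q T)) = (\<lambda>x. (x, \<phi> x)) ` interp Q T"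
  by (simp add: Abs_fset_inverse interp_finite)

lemma app_mkfun: "finite Q \<Longrightarrow> x \<in> interp Q T \<Longrightarrow> app (mkfun Q T \<phi>) x = \<phi> x"
  by (auto simp: mkfun_def fset_mkfun)

lemma mkfun_interp: "finite Q \<Longrightarrow> (\<And>x. x \<in> interp Q T \<Longrightarrow> \<phi> x \<in> interp Q U) \<Longrightarrow> mkfun Q T \<phi> \<in> interp Q (TArr T U)"
  by (auto simp: mkfun_def fset_mkfun)

lemma app_interp: "g \<in> interp Q (TArr T U) \<Longrightarrow> x \<in> interp Q T \<Longrightarrow> app g x \<in> interp Q U"
proof -
  assume g: "g \<in> interp Q (TArr T U)" and x: "x \<in> interp Q T"
  then obtain G where G: "g = Fn G" "fset G \<subseteq> interp Q T \<times> interp Q U" "\<forall>x\<in>interp Q T. \<exists>!y. (x, y) \<in> fset G" by auto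
  then obtain y where y: "(x, y) \<in> fset G" using x by blast
  have "\<exists>!y. (x, y) \<in> fset G" using G x by blast
  then have "app g x = y" using G y by (simp add: the1_equality)
  then show ?thesis using y G by auto
qed

lemma app_graph: "g \<in> interp Q (TArr T U) \<Longrightarrow> g = Fn G \<Longrightarrow> fset G = (\<lambda>x. (x, app g x)) ` interp Q T"
proof -
  assume g: "g \<in> interp Q (TArr T U)" and gG: "g = Fn G"
  then have G: "fset G \<subseteq> interp Q T \<times> interp Q U" "\<forall>x\<in>interp Q T. \<exists>!y. (x, y) \<in> fset G" by auto
  have ap: "app g x = y" if xy: "(x, y) \<in> fset G" for x y
  proof -
    have "x \<in> interp Q T" using G xy by auto
    then have "\<exists>!y. (x, y) \<in> fset G" using G by blast
    then show ?thesis using gG xy by (simp add: the1_equality)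
  qed
  show ?thesis
  proof
    show "fset G \<subseteq> (\<lambda>x. (x, app g x)) ` interp Q T"
      using G ap by force
    show "(\<lambda>x. (x, app g x)) ` interp Q T \<subseteq> fset G"
      using G ap by force
  qed
qed

lemma fun_ext:
  assumes "g \<in> interp Q (TArr T U)" "h \<in> interp Q (TArr T U)"
    "\<And>x. x \<in> interp Q T \<Longrightarrow> app g x = app h x"
  shows "g = h"
proof -
  obtain G H where "g = Fn G" "h = Fn H" using assms(1,2) by auto
  with app_graph[OF assms(1)] app_graph[OF assms(2)] assms(3)
  have "fset G = fset H" by auto
  then show ?thesis using \<open>g = Fn G\<close> \<open>h = Fn H\<close> by (simp add: fset_inject)
qed

lemma env_Cons: "(\<forall>i<length (T # \<Gamma>). P ((x # \<rho>) ! i) ((T # \<Gamma>) ! i)) \<longleftrightarrow>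
   P x T \<and> (\<forall>i<length \<Gamma>. P (\<rho> ! i) (\<Gamma> ! i))"
  by (auto simp: less_Suc_eq_0_disj)

lemma soundness:
  "typing \<Gamma> M T \<Longrightarrow> finite Q \<Longrightarrow> length \<rho> = length \<Gamma> \<Longrightarrow>
   (\<forall>i<length \<Gamma>. \<rho> ! i \<in> interp Q (\<Gamma> ! i)) \<Longrightarrow> eval Q \<rho> M \<in> interp Q T"
proof (induction arbitrary: \<rho> rule: typing.induct)
  case (tvar i \<Gamma>) then show ?case by simp
next
  case (tapp \<Gamma> s T U t)
  have "eval Q \<rho> s \<in> interp Q (TArr T U)" using tapp.IH(1) tapp.prems by blast
  moreover have "eval Q \<rho> t \<in> interp Q T" using tapp.IH(2) tapp.prems by blast
  ultimately show ?case by (simp only: eval.simps app_interp)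
next
  case (tabs T \<Gamma> s U)
  show ?case unfolding eval_LAbs
  proof (rule mkfun_interp[OF tabs.prems(1)])
    fix x assume x: "x \<in> interp Q T"
    have "\<forall>i<length (T # \<Gamma>). (x # \<rho>) ! i \<in> interp Q ((T # \<Gamma>) ! i)"
      using env_Cons[where P = "\<lambda>a b. a \<in> interp Q b"] x tabs.prems by blast
    then show "eval Q (x # \<rho>) s \<in> interp Q U"
      using tabs.IH tabs.prems by simp
  qed
qed

lemma lrel_sub: "f \<subseteq> Q \<times> Q' \<Longrightarrow> (g, h) \<in> lrel Q Q' f A \<Longrightarrow> g \<in> interp Q A \<and> h \<in> interp Q' A"
  by (cases A) auto

lemma fundamental:
  "typing \<Gamma> M T \<Longrightarrow> finite Q \<Longrightarrow> finite Q' \<Longrightarrow> f \<subseteq> Q \<times> Q' \<Longrightarrow>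
   length \<rho> = length \<Gamma> \<Longrightarrow> length \<rho>' = length \<Gamma> \<Longrightarrow>
   (\<forall>i<length \<Gamma>. (\<rho> ! i, \<rho>' ! i) \<in> lrel Q Q' f (\<Gamma> ! i)) \<Longrightarrow>
   (eval Q \<rho> M, eval Q' \<rho>' M) \<in> lrel Q Q' f T"
proof (induction arbitrary: \<rho> \<rho>' rule: typing.induct)
  case (tvar i \<Gamma>) then show ?case by simp
next
  case (tapp \<Gamma> s T U t)
  then have "(eval Q \<rho> s, eval Q' \<rho>' s) \<in> lrel Q Q' f (TArr T U)"
    "(eval Q \<rho> t, eval Q' \<rho>' t) \<in> lrel Q Q' f T" by blast+
  then show ?case by auto
next
  case (tabs T \<Gamma> s U)
  have e1: "\<forall>i<length \<Gamma>. \<rho> ! i \<in> interp Q (\<Gamma> ! i)" and e2: "\<forall>i<length \<Gamma>. \<rho>' ! i \<in> interp Q' (\<Gamma> ! i)"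
    using tabs.prems(6) lrel_sub[OF tabs.prems(3)] by blast+
  have ty: "typing \<Gamma> (LAbs T s) (TArr T U)" using tabs.hyps by (rule typing.tabs)
  have s1: "eval Q \<rho> (LAbs T s) \<in> interp Q (TArr T U)"
    using soundness[OF ty tabs.prems(1) tabs.prems(4) e1] .
  have s2: "eval Q' \<rho>' (LAbs T s) \<in> interp Q' (TArr T U)"
    using soundness[OF ty tabs.prems(2) tabs.prems(5) e2] .
  have "(app (eval Q \<rho> (LAbs T s)) x, app (eval Q' \<rho>' (LAbs T s)) y) \<in> lrel Q Q' f U"
    if xy: "(x, y) \<in> lrel Q Q' f T" for x y
  proof -
    have x: "x \<in> interp Q T" and y: "y \<in> interp Q' T" using lrel_sub[OF tabs.prems(3) xy] by auto
    have "\<forall>i<length (T # \<Gamma>). ((x # \<rho>) ! i, (y # \<rho>') ! i) \<in> lrel Q Q' f ((T # \<Gamma>) ! i)"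
      using xy tabs.prems(6) by (auto simp: less_Suc_eq_0_disj)
    then have "(eval Q (x # \<rho>) s, eval Q' (y # \<rho>') s) \<in> lrel Q Q' f U"
      using tabs.IH tabs.prems by simp
    then show ?thesis unfolding eval_LAbs
      using app_mkfun[OF tabs.prems(1) x] app_mkfun[OF tabs.prems(2) y] by simp
  qed
  then show ?case using s1 s2 by auto
qed

lemma interp_nonempty: "finite Q \<Longrightarrow> Q \<noteq> {} \<Longrightarrow> interp Q A \<noteq> {}"
proof (induction A)
  case TO then show ?case by simp
next
  case (TArr A B)
  then obtain w where "w \<in> interp Q B" by blast
  then have "mkfun Q A (\<lambda>_. w) \<in> interp Q (TArr A B)" by (rule mkfun_interp[OF TArr.prems(1)])
  then show ?case by blast
qed

lemma lrel_fun_surj: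
  assumes ps: "psurj Q Q' f" and fQ: "finite Q" and fQ': "finite Q'"
  shows "(\<forall>g h h'. (g, h) \<in> lrel Q Q' f A \<longrightarrow> (g, h') \<in> lrel Q Q' f A \<longrightarrow> h = h') \<and>
         (\<forall>h\<in>interp Q' A. \<exists>g. (g, h) \<in> lrel Q Q' f A)"
proof (induction A)
  case TO
  have sv: "single_valued f" and rg: "Range f = Q'" and sub: "f \<subseteq> Q \<times> Q'" using ps by (auto simp: psurj_def)
  show ?case
  proof (intro conjI allI impI ballI)
    fix g h h' assume "(g, h) \<in> lrel Q Q' f TO" "(g, h') \<in> lrel Q Q' f TO"
    then show "h = h'" using sv by (auto dest: single_valuedD)
  next
    fix h assume "h \<in> interp Q' TO"
    then obtain b where "h = Base b" "b \<in> Q'" by auto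
    then obtain a where "(a, b) \<in> f" using rg by blast
    then show "\<exists>g. (g, h) \<in> lrel Q Q' f TO" using \<open>h = Base b\<close> by auto
  qed
next
  case (TArr A B)
  have sub: "f \<subseteq> Q \<times> Q'" and rg: "Range f = Q'" using ps by (auto simp: psurj_def)
  have fA: "\<And>g h h'. (g, h) \<in> lrel Q Q' f A \<Longrightarrow> (g, h') \<in> lrel Q Q' f A \<Longrightarrow> h = h'"
    and sA: "\<And>h. h \<in> interp Q' A \<Longrightarrow> \<exists>g. (g, h) \<in> lrel Q Q' f A"
    and fB: "\<And>g h h'. (g, h) \<in> lrel Q Q' f B \<Longrightarrow> (g, h') \<in> lrel Q Q' f B \<Longrightarrow> h = h'"
    and sB: "\<And>h. h \<in> interp Q' B \<Longrightarrow> \<exists>g. (g, h) \<in> lrel Q Q' f B"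
    using TArr.IH by blast+
  show ?case
  proof (intro conjI allI impI ballI)
    fix g h h' assume gh: "(g, h) \<in> lrel Q Q' f (TArr A B)" and gh': "(g, h') \<in> lrel Q Q' f (TArr A B)"
    show "h = h'"
    proof (rule fun_ext)
      show "h \<in> interp Q' (TArr A B)" "h' \<in> interp Q' (TArr A B)" using gh gh' by auto
      fix y assume "y \<in> interp Q' A"
      then obtain x where xy: "(x, y) \<in> lrel Q Q' f A" using sA by blast
      then have "(app g x, app h y) \<in> lrel Q Q' f B" "(app g x, app h' y) \<in> lrel Q Q' f B"
        using gh gh' by auto
      then show "app h y = app h' y" using fB by blast
    qed
  next
    fix h assume h: "h \<in> interp Q' (TArr A B)"
    define y0 where "y0 x = (SOME y. (x, y) \<in> lrel Q Q' f A)" for x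
    define w where "w = (SOME w. w \<in> interp Q B)"
    define \<phi> where "\<phi> x = (if \<exists>y. (x, y) \<in> lrel Q Q' f A
        then (SOME z. (z, app h (y0 x)) \<in> lrel Q Q' f B) else w)" for x
    have ne: "interp Q B \<noteq> {}" if x: "x \<in> interp Q A" for x
    proof (cases "Q = {}")
      case True
      then have "Q' = {}" using sub rg by auto
      then show ?thesis using True x h app_interp by auto
    next
      case False then show ?thesis using interp_nonempty fQ by blast
    qed
    have phi_ok: "\<phi> x \<in> interp Q B \<and> (\<forall>y. (x, y) \<in> lrel Q Q' f A \<longrightarrow> (\<phi> x, app h y) \<in> lrel Q Q' f B)"
      if x: "x \<in> interp Q A" for x
    proof (cases "\<exists>y. (x, y) \<in> lrel Q Q' f A")
      case True
      then have xy0: "(x, y0 x) \<in> lrel Q Q' f A" unfolding y0_def by (rule someI_ex)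
      then have "y0 x \<in> interp Q' A" using lrel_sub[OF sub] by blast
      then have "app h (y0 x) \<in> interp Q' B" using h app_interp by blast
      then have "\<exists>z. (z, app h (y0 x)) \<in> lrel Q Q' f B" using sB by blast
      then have "(SOME z. (z, app h (y0 x)) \<in> lrel Q Q' f B, app h (y0 x)) \<in> lrel Q Q' f B" by (rule someI_ex)
      moreover have "\<phi> x = (SOME z. (z, app h (y0 x)) \<in> lrel Q Q' f B)" unfolding \<phi>_def using True by simp
      ultimately have z: "(\<phi> x, app h (y0 x)) \<in> lrel Q Q' f B" by simp
      show ?thesis
      proof
        show "\<phi> x \<in> interp Q B" using z lrel_sub[OF sub] by blast
        show "\<forall>y. (x, y) \<in> lrel Q Q' f A \<longrightarrow> (\<phi> x, app h y) \<in> lrel Q Q' f B"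
          using z xy0 fA by blast
      qed
    next
      case False
      then have "\<phi> x = w" unfolding \<phi>_def by simp
      moreover have "w \<in> interp Q B" unfolding w_def using ne[OF x] by (simp add: some_in_eq)
      ultimately show ?thesis using False by blast
    qed
    have g: "mkfun Q A \<phi> \<in> interp Q (TArr A B)" using mkfun_interp[OF fQ] phi_ok by blast
    have "(mkfun Q A \<phi>, h) \<in> lrel Q Q' f (TArr A B)"
    proof -
      have "(app (mkfun Q A \<phi>) x, app h y) \<in> lrel Q Q' f B" if xy: "(x, y) \<in> lrel Q Q' f A" for x y
      proof -
        have x: "x \<in> interp Q A" using lrel_sub[OF sub xy] by blast
        show ?thesis using app_mkfun[OF fQ x] phi_ok[OF x] xy by simp
      qed
      then show ?thesis using g h by auto
    qed
    then show "\<exists>g. (g, h) \<in> lrel Q Q' f (TArr A B)" by blast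
  qed
qed




lemma Lam_class: "c \<in> Lam A \<Longrightarrow> c \<subseteq> Terms A \<and> c \<noteq> {}"
proof -
  assume "c \<in> Lam A"
  then obtain M where M: "M \<in> Terms A" and c: "c = conv A `` {M}"
    unfolding Lam_def by (auto elim: quotientE)
  define r where "r = {(M, N). M \<in> Terms A \<and> N \<in> Terms A \<and> be_step M N}"
  have cv: "conv A = (r \<union> r\<inverse>)\<^sup>*" unfolding conv_def r_def Let_def by simp
  have "N \<in> Terms A" if "(M, N) \<in> (r \<union> r\<inverse>)\<^sup>*" for N
    using that by (induction rule: rtrancl_induct) (auto simp: M r_def)
  moreover have "M \<in> c" unfolding c cv by auto
  ultimately show ?thesis unfolding c cv by auto
qed

lemma den_term: "c \<in> Lam A \<Longrightarrow> (SOME M. M \<in> c) \<in> Terms A"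
  using Lam_class by (metis some_in_eq subsetD)

lemma den_interp: "finite Q \<Longrightarrow> c \<in> Lam A \<Longrightarrow> den Q c \<in> interp Q A"
  unfolding den_def using den_term[of c A] soundness[of "[]" _ A Q "[]"] by (auto simp: Terms_def)

lemma den_fund: "finite Q \<Longrightarrow> finite Q' \<Longrightarrow> f \<subseteq> Q \<times> Q' \<Longrightarrow> c \<in> Lam A \<Longrightarrow>
   (den Q c, den Q' c) \<in> lrel Q Q' f A"
  unfolding den_def using den_term[of c A] fundamental[of "[]" _ A Q Q' f "[]" "[]"] by (auto simp: Terms_def)

definition rep :: "ty \<Rightarrow> nat set \<Rightarrow> sem set \<Rightarrow> lterm set set \<Rightarrow> bool" where
  "rep A Q F a \<longleftrightarrow> finite Q \<and> F \<subseteq> interp Q A \<and> a = {c \<in> Lam A. den Q c \<in> F}"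

lemma Reg_iff: "a \<in> Reg A \<longleftrightarrow> (\<exists>Q F. rep A Q F a)"
  unfolding Reg_def Reg_Q_def rep_def by auto

lemma psurj_Id: "Q1 \<subseteq> Q \<Longrightarrow> psurj Q Q1 (Id_on Q1)"
  unfolding psurj_def single_valued_def by auto

lemma restr_unique:
  "finite Q \<Longrightarrow> Q1 \<subseteq> Q \<Longrightarrow> (x, y) \<in> lrel Q Q1 (Id_on Q1) A \<Longrightarrow> (x, y') \<in> lrel Q Q1 (Id_on Q1) A \<Longrightarrow> y = y'"
  using lrel_fun_surj[OF psurj_Id, of Q1 Q A] finite_subset[of Q1 Q] by blast

lemma lift_rep:
  assumes r: "rep A Q1 F a" and sub: "Q1 \<subseteq> Q" and fin: "finite Q"
  shows "rep A Q {x \<in> interp Q A. \<exists>y\<in>F. (x, y) \<in> lrel Q Q1 (Id_on Q1) A} a"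
proof -
  have f1: "finite Q1" and F: "F \<subseteq> interp Q1 A" and a: "a = {c \<in> Lam A. den Q1 c \<in> F}"
    using r by (auto simp: rep_def)
  have idsub: "Id_on Q1 \<subseteq> Q \<times> Q1" using sub by auto
  have "den Q1 c \<in> F \<longleftrightarrow> (den Q c \<in> interp Q A \<and> (\<exists>y\<in>F. (den Q c, y) \<in> lrel Q Q1 (Id_on Q1) A))"
    if c: "c \<in> Lam A" for c
  proof -
    have rel: "(den Q c, den Q1 c) \<in> lrel Q Q1 (Id_on Q1) A"
      using den_fund[OF fin f1 idsub c] .
    show ?thesis using rel den_interp[OF fin c] restr_unique[OF fin sub rel] by blast
  qed
  then show ?thesis using fin a unfolding rep_def by auto
qed

lemma common_rep:
  assumes "rep A Q1 F1 a" "rep A Q2 F2 b"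
  shows "\<exists>Q G1 G2. rep A Q G1 a \<and> rep A Q G2 b"
proof -
  have "finite (Q1 \<union> Q2)" using assms by (auto simp: rep_def)
  then show ?thesis using lift_rep[OF assms(1), of "Q1 \<union> Q2"] lift_rep[OF assms(2), of "Q1 \<union> Q2"] by blast
qed

lemma Profin_D: "\<theta> \<in> Profin A \<Longrightarrow> finite Q \<Longrightarrow> \<theta> Q \<in> D Q A"
  by (auto simp: Profin_def)

lemma Profin_den: "\<theta> \<in> Profin A \<Longrightarrow> finite Q \<Longrightarrow> \<exists>c\<in>Lam A. \<theta> Q = den Q c"
proof -
  assume "\<theta> \<in> Profin A" "finite Q"
  then have "\<theta> Q \<in> den Q ` Lam A" using Profin_D unfolding D_def by metis
  then show ?thesis by blast
qed

lemma Profin_interp: "\<theta> \<in> Profin A \<Longrightarrow> finite Q \<Longrightarrow> \<theta> Q \<in> interp Q A"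
  using Profin_den den_interp by metis

lemma Profin_rel: "\<theta> \<in> Profin A \<Longrightarrow> finite Q \<Longrightarrow> finite Q' \<Longrightarrow> psurj Q Q' f \<Longrightarrow> (\<theta> Q, \<theta> Q') \<in> lrel Q Q' f A"
  by (auto simp: Profin_def)

lemma Profin_restr:
  assumes th: "\<theta> \<in> Profin A" and fin: "finite Q" and sub: "Q1 \<subseteq> Q" and c: "c \<in> Lam A"
    and eq: "\<theta> Q = den Q c"
  shows "\<theta> Q1 = den Q1 c"
proof -
  have f1: "finite Q1" using fin sub finite_subset by blast
  have "(\<theta> Q, \<theta> Q1) \<in> lrel Q Q1 (Id_on Q1) A" using Profin_rel[OF th fin f1 psurj_Id[OF sub]] .
  moreover have "Id_on Q1 \<subseteq> Q \<times> Q1" using sub by auto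
  then have "(den Q c, den Q1 c) \<in> lrel Q Q1 (Id_on Q1) A"
    using den_fund[OF fin f1 _ c] by blast
  ultimately show ?thesis using restr_unique[OF fin sub] eq by metis
qed

lemma KL:
  assumes th: "\<theta> \<in> Profin A" and "finite Q1" "finite Q2"
  shows "\<exists>c\<in>Lam A. \<theta> Q1 = den Q1 c \<and> \<theta> Q2 = den Q2 c"
proof -
  have fin: "finite (Q1 \<union> Q2)" using assms by auto
  then obtain c where c: "c \<in> Lam A" "\<theta> (Q1 \<union> Q2) = den (Q1 \<union> Q2) c" using Profin_den[OF th] by blast
  show ?thesis using Profin_restr[OF th fin _ c] c(1) by blast
qed

definition memb :: "ty \<Rightarrow> (nat set \<Rightarrow> sem) \<Rightarrow> lterm set set \<Rightarrow> bool" where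
  "memb A \<theta> a \<longleftrightarrow> (\<exists>Q F. rep A Q F a \<and> \<theta> Q \<in> F)"

lemma memb_iff:
  assumes th: "\<theta> \<in> Profin A" and r: "rep A Q F a"
  shows "memb A \<theta> a \<longleftrightarrow> \<theta> Q \<in> F"
proof
  assume "\<theta> Q \<in> F" then show "memb A \<theta> a" using r by (auto simp: memb_def)
next
  assume "memb A \<theta> a"
  then obtain Q' F' where r': "rep A Q' F' a" and in': "\<theta> Q' \<in> F'" by (auto simp: memb_def)
  have "finite Q" "finite Q'" using r r' by (auto simp: rep_def)
  then obtain c where c: "c \<in> Lam A" "\<theta> Q = den Q c" "\<theta> Q' = den Q' c" using KL[OF th] by blast
  then have "c \<in> a" using r' in' by (auto simp: rep_def)
  then show "\<theta> Q \<in> F" using r c by (auto simp: rep_def)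
qed




lemma rep_Lam: "rep A {} (interp {} A) (Lam A)"
  using den_interp[of "{}"] by (auto simp: rep_def)

lemma rep_Int: "rep A Q F a \<Longrightarrow> rep A Q G b \<Longrightarrow> rep A Q (F \<inter> G) (a \<inter> b)"
  by (auto simp: rep_def)

lemma rep_Un: "rep A Q F a \<Longrightarrow> rep A Q G b \<Longrightarrow> rep A Q (F \<union> G) (a \<union> b)"
  by (auto simp: rep_def)

lemma rep_Diff: "rep A Q F a \<Longrightarrow> rep A Q (interp Q A - F) (Lam A - a)"
  using den_interp by (auto simp: rep_def)

lemma rep_empty: "finite Q \<Longrightarrow> rep A Q {} {}"
  by (auto simp: rep_def)

definition Lq :: "ty \<Rightarrow> nat set \<Rightarrow> sem \<Rightarrow> lterm set set" where
  "Lq A Q q = {c \<in> Lam A. den Q c = q}"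

lemma rep_Lq: "finite Q \<Longrightarrow> q \<in> interp Q A \<Longrightarrow> rep A Q {q} (Lq A Q q)"
  by (auto simp: rep_def Lq_def)

definition PhiM :: "ty \<Rightarrow> (nat set \<Rightarrow> sem) \<Rightarrow> lterm set set set" where
  "PhiM A \<theta> = {a \<in> Reg A. memb A \<theta> a}"




lemma PhiM_uf:
  assumes th: "\<theta> \<in> Profin A"
  shows "ultrafilter_on (Lam A) (Reg A) (PhiM A \<theta>)"
  unfolding ultrafilter_on_def
proof (intro conjI ballI impI)
  show "PhiM A \<theta> \<subseteq> Reg A" by (auto simp: PhiM_def)
  show "Lam A \<in> PhiM A \<theta>"
  proof -
    have "Lam A \<in> Reg A" using rep_Lam Reg_iff by blast
    moreover have "\<theta> {} \<in> interp {} A" using Profin_interp[OF th] by simp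
    then have "memb A \<theta> (Lam A)" using memb_iff[OF th rep_Lam] by simp
    ultimately show ?thesis by (simp add: PhiM_def)
  qed
  show "{} \<notin> PhiM A \<theta>"
  proof
    assume "{} \<in> PhiM A \<theta>"
    then obtain Q F where r: "rep A Q F {}" "\<theta> Q \<in> F" by (auto simp: PhiM_def memb_def)
    have "finite Q" using r by (simp add: rep_def)
    then obtain c where "c \<in> Lam A" "\<theta> Q = den Q c" using Profin_den[OF th] by blast
    then show False using r by (auto simp: rep_def)
  qed
next
  fix a b assume a: "a \<in> PhiM A \<theta>" and b: "b \<in> Reg A" and ab: "a \<subseteq> b"
  obtain Q1 F1 Q2 F2 where "rep A Q1 F1 a" "rep A Q2 F2 b" using a b by (auto simp: PhiM_def Reg_iff)
  then obtain Q Fa Fb where ra: "rep A Q Fa a" and rb: "rep A Q Fb b" using common_rep by blast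
  have "\<theta> Q \<in> Fa" using a memb_iff[OF th ra] by (auto simp: PhiM_def)
  moreover obtain c where "c \<in> Lam A" "\<theta> Q = den Q c" using Profin_den[OF th] ra by (auto simp: rep_def)
  ultimately have "\<theta> Q \<in> Fb" using ra rb ab by (auto simp: rep_def)
  then show "b \<in> PhiM A \<theta>" using b memb_iff[OF th rb] by (auto simp: PhiM_def)
next
  fix a b assume a: "a \<in> PhiM A \<theta>" and b: "b \<in> PhiM A \<theta>"
  obtain Q1 F1 Q2 F2 where "rep A Q1 F1 a" "rep A Q2 F2 b" using a b by (auto simp: PhiM_def Reg_iff)
  then obtain Q Fa Fb where ra: "rep A Q Fa a" and rb: "rep A Q Fb b" using common_rep by blast
  have "\<theta> Q \<in> Fa" "\<theta> Q \<in> Fb" using a b memb_iff[OF th ra] memb_iff[OF th rb] by (auto simp: PhiM_def)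
  moreover have "a \<inter> b \<in> Reg A" using rep_Int[OF ra rb] Reg_iff by blast
  ultimately show "a \<inter> b \<in> PhiM A \<theta>" using memb_iff[OF th rep_Int[OF ra rb]]
    by (simp add: PhiM_def)
next
  fix a assume a: "a \<in> Reg A"
  then obtain Q F where r: "rep A Q F a" by (auto simp: Reg_iff)
  have "\<theta> Q \<in> interp Q A" using Profin_interp[OF th] r by (auto simp: rep_def)
  have d: "Lam A - a \<in> Reg A" using rep_Diff[OF r] Reg_iff by blast
  show "a \<in> PhiM A \<theta> \<or> Lam A - a \<in> PhiM A \<theta>"
  proof (cases "\<theta> Q \<in> F")
    case True
    then have "a \<in> PhiM A \<theta>" using a memb_iff[OF th r] by (simp add: PhiM_def)
    then show ?thesis by blast
  next
    case False
    then have "\<theta> Q \<in> interp Q A - F" using \<open>\<theta> Q \<in> interp Q A\<close> by blast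
    then have "Lam A - a \<in> PhiM A \<theta>" using d memb_iff[OF th rep_Diff[OF r]] by (simp add: PhiM_def)
    then show ?thesis by blast
  qed
qed




definition PsiM :: "ty \<Rightarrow> lterm set set set \<Rightarrow> nat set \<Rightarrow> sem" where
  "PsiM A U = (\<lambda>Q. if finite Q then (THE q. q \<in> interp Q A \<and> Lq A Q q \<in> U) else undefined)"

lemma uf_props:
  assumes "ultrafilter_on X B U"
  shows "U \<subseteq> B" "X \<in> U" "{} \<notin> U" "\<And>a b. a \<in> U \<Longrightarrow> b \<in> B \<Longrightarrow> a \<subseteq> b \<Longrightarrow> b \<in> U"
    "\<And>a b. a \<in> U \<Longrightarrow> b \<in> U \<Longrightarrow> a \<inter> b \<in> U" "\<And>a. a \<in> B \<Longrightarrow> a \<in> U \<or> X - a \<in> U"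
  using assms unfolding ultrafilter_on_def
  by (simp_all only: Ball_def) blast+

lemma uf_ex:
  assumes U: "ultrafilter_on (Lam A) (Reg A) U" and fin: "finite Q"
  shows "\<exists>q\<in>interp Q A. Lq A Q q \<in> U"
proof -
  have "\<forall>F. finite F \<longrightarrow> F \<subseteq> interp Q A \<longrightarrow> {c \<in> Lam A. den Q c \<in> F} \<in> U \<longrightarrow> (\<exists>q\<in>F. Lq A Q q \<in> U)"
  proof (intro allI impI)
    fix F :: "sem set" assume "finite F"
    then show "F \<subseteq> interp Q A \<Longrightarrow> {c \<in> Lam A. den Q c \<in> F} \<in> U \<Longrightarrow> (\<exists>q\<in>F. Lq A Q q \<in> U)"
    proof (induction F rule: finite_induct)
      case empty then show ?case using uf_props(3)[OF U] by simp
    next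
      case (insert q F)
      show ?case
      proof (cases "Lq A Q q \<in> U")
        case True then show ?thesis by blast
      next
        case False
        have "Lq A Q q \<in> Reg A" using rep_Lq[OF fin] insert.prems by (auto simp: Reg_iff)
        then have "Lam A - Lq A Q q \<in> U" using uf_props(6)[OF U] False by blast
        then have "(Lam A - Lq A Q q) \<inter> {c \<in> Lam A. den Q c \<in> insert q F} \<in> U"
          using uf_props(5)[OF U] insert.prems by blast
        moreover have "(Lam A - Lq A Q q) \<inter> {c \<in> Lam A. den Q c \<in> insert q F} = {c \<in> Lam A. den Q c \<in> F}"
          using insert.hyps by (auto simp: Lq_def)
        ultimately show ?thesis using insert.IH insert.prems by auto
      qed
    qed
  qed
  moreover have "{c \<in> Lam A. den Q c \<in> interp Q A} = Lam A" using den_interp[OF fin] by blast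
  then have "{c \<in> Lam A. den Q c \<in> interp Q A} \<in> U" using uf_props(2)[OF U] by simp
  ultimately show ?thesis using interp_finite[OF fin] by blast
qed

lemma uf_uniq:
  assumes U: "ultrafilter_on (Lam A) (Reg A) U" and "Lq A Q q \<in> U" "Lq A Q q' \<in> U"
  shows "q = q'"
proof (rule ccontr)
  assume "q \<noteq> q'"
  then have "Lq A Q q \<inter> Lq A Q q' = {}" by (auto simp: Lq_def)
  moreover have "Lq A Q q \<inter> Lq A Q q' \<in> U" using uf_props(5)[OF U] assms(2,3) by blast
  ultimately show False using uf_props(3)[OF U] by simp
qed

lemma PsiM_prop:
  assumes U: "ultrafilter_on (Lam A) (Reg A) U" and fin: "finite Q"
  shows "PsiM A U Q \<in> interp Q A \<and> Lq A Q (PsiM A U Q) \<in> U"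
proof -
  obtain q where q: "q \<in> interp Q A" "Lq A Q q \<in> U" using uf_ex[OF U fin] by blast
  have "(THE q. q \<in> interp Q A \<and> Lq A Q q \<in> U) = q"
    by (rule the_equality) (use q uf_uniq[OF U] in blast)+
  then have "PsiM A U Q = q" unfolding PsiM_def using fin by simp
  then show ?thesis using q by simp
qed

lemma uf_rep:
  assumes U: "ultrafilter_on (Lam A) (Reg A) U" and r: "rep A Q F a"
  shows "a \<in> U \<longleftrightarrow> PsiM A U Q \<in> F"
proof -
  have fin: "finite Q" using r by (auto simp: rep_def)
  note P = PsiM_prop[OF U fin]
  show ?thesis
  proof
    assume a: "a \<in> U"
    show "PsiM A U Q \<in> F"
    proof (rule ccontr)
      assume "PsiM A U Q \<notin> F"
      then have "a \<inter> Lq A Q (PsiM A U Q) = {}" using r by (auto simp: rep_def Lq_def)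
      moreover have "a \<inter> Lq A Q (PsiM A U Q) \<in> U" using uf_props(5)[OF U] a P by blast
      ultimately show False using uf_props(3)[OF U] by simp
    qed
  next
    assume "PsiM A U Q \<in> F"
    then have "Lq A Q (PsiM A U Q) \<subseteq> a" using r by (auto simp: rep_def Lq_def)
    moreover have "a \<in> Reg A" using r by (auto simp: Reg_iff)
    ultimately show "a \<in> U" using uf_props(4)[OF U] P by blast
  qed
qed

lemma PsiM_Profin:
  assumes U: "ultrafilter_on (Lam A) (Reg A) U"
  shows "PsiM A U \<in> Profin A"
  unfolding Profin_def
proof (intro CollectI conjI allI impI)
  fix Q :: "nat set" assume fin: "finite Q"
  note P = PsiM_prop[OF U fin]
  then have "Lq A Q (PsiM A U Q) \<noteq> {}" using uf_props(3)[OF U] by force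
  then obtain c where "c \<in> Lq A Q (PsiM A U Q)" by blast
  then have "c \<in> Lam A" "den Q c = PsiM A U Q" unfolding Lq_def by auto
  then show "PsiM A U Q \<in> D Q A" unfolding D_def by (rule_tac image_eqI) auto
next
  fix Q :: "nat set" assume "infinite Q" then show "PsiM A U Q = undefined" by (simp add: PsiM_def)
next
  fix Q Q' f assume fin: "finite Q" and fin': "finite Q'" and ps: "psurj Q Q' f"
  have "Lq A Q (PsiM A U Q) \<inter> Lq A Q' (PsiM A U Q') \<in> U"
    using PsiM_prop[OF U fin] PsiM_prop[OF U fin'] uf_props(5)[OF U] by blast
  then have "Lq A Q (PsiM A U Q) \<inter> Lq A Q' (PsiM A U Q') \<noteq> {}" using uf_props(3)[OF U] by force
  then obtain c where c: "c \<in> Lam A" "den Q c = PsiM A U Q" "den Q' c = PsiM A U Q'" by (auto simp: Lq_def)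
  have "f \<subseteq> Q \<times> Q'" using ps by (simp add: psurj_def)
  from den_fund[OF fin fin' this c(1)] show "(PsiM A U Q, PsiM A U Q') \<in> lrel Q Q' f A" using c(2,3) by simp
qed

lemma PhiM_PsiM:
  assumes U: "ultrafilter_on (Lam A) (Reg A) U"
  shows "PhiM A (PsiM A U) = U"
proof -
  have "a \<in> U \<longleftrightarrow> memb A (PsiM A U) a" if a: "a \<in> Reg A" for a
  proof -
    obtain Q F where r: "rep A Q F a" using a Reg_iff by blast
    show ?thesis using uf_rep[OF U r] memb_iff[OF PsiM_Profin[OF U] r] by simp
  qed
  then show ?thesis using uf_props(1)[OF U] by (auto simp: PhiM_def)
qed

lemma PsiM_PhiM:
  assumes th: "\<theta> \<in> Profin A"
  shows "PsiM A (PhiM A \<theta>) = \<theta>"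
proof
  fix Q :: "nat set"
  show "PsiM A (PhiM A \<theta>) Q = \<theta> Q"
  proof (cases "finite Q")
    case fin: True
    have *: "Lq A Q q \<in> PhiM A \<theta> \<longleftrightarrow> \<theta> Q = q" if "q \<in> interp Q A" for q
    proof -
      have "Lq A Q q \<in> Reg A" using rep_Lq[OF fin that] Reg_iff by blast
      then show ?thesis using memb_iff[OF th rep_Lq[OF fin that]] by (auto simp: PhiM_def)
    qed
    have "(THE q. q \<in> interp Q A \<and> Lq A Q q \<in> PhiM A \<theta>) = \<theta> Q"
    proof (rule the_equality)
      show "\<theta> Q \<in> interp Q A \<and> Lq A Q (\<theta> Q) \<in> PhiM A \<theta>" using Profin_interp[OF th fin] * by blast
      show "\<And>q. q \<in> interp Q A \<and> Lq A Q q \<in> PhiM A \<theta> \<Longrightarrow> q = \<theta> Q" using * by blast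
    qed
    then show ?thesis unfolding PsiM_def using fin by simp
  next
    case False
    have "\<theta> Q = undefined" using th False unfolding Profin_def by blast
    then show ?thesis using False by (simp add: PsiM_def)
  qed
qed




lemma D_sub: "finite Q \<Longrightarrow> D Q A \<subseteq> interp Q A"
  unfolding D_def using den_interp by blast

lemma topspace_P: "topspace (profin_top A) = Profin A"
proof -
  have "\<Union>{{\<theta> \<in> Profin A. \<theta> Q = q} | Q q. finite Q \<and> q \<in> D Q A} = Profin A"
  proof
    show "\<Union>{{\<theta> \<in> Profin A. \<theta> Q = q} | Q q. finite Q \<and> q \<in> D Q A} \<subseteq> Profin A" by blast
    show "Profin A \<subseteq> \<Union>{{\<theta> \<in> Profin A. \<theta> Q = q} | Q q. finite Q \<and> q \<in> D Q A}"
    proof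
      fix \<theta> assume th: "\<theta> \<in> Profin A"
      then have "\<theta> {} \<in> D {} A" using Profin_D by blast
      then show "\<theta> \<in> \<Union>{{\<theta> \<in> Profin A. \<theta> Q = q} | Q q. finite Q \<and> q \<in> D Q A}"
        using th by blast
    qed
  qed
  then show ?thesis unfolding profin_top_def by simp
qed

lemma topspace_S: "topspace (stone_space (Lam A) (Reg A)) = {U. ultrafilter_on (Lam A) (Reg A) U}"
proof -
  have "\<Union>{{U. ultrafilter_on (Lam A) (Reg A) U \<and> a \<in> U} | a. a \<in> Reg A} = {U. ultrafilter_on (Lam A) (Reg A) U}"
  proof
    show "\<Union>{{U. ultrafilter_on (Lam A) (Reg A) U \<and> a \<in> U} | a. a \<in> Reg A} \<subseteq> {U. ultrafilter_on (Lam A) (Reg A) U}" by blast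
    show "{U. ultrafilter_on (Lam A) (Reg A) U} \<subseteq> \<Union>{{U. ultrafilter_on (Lam A) (Reg A) U \<and> a \<in> U} | a. a \<in> Reg A}"
    proof
      fix U assume U: "U \<in> {U. ultrafilter_on (Lam A) (Reg A) U}"
      then have u: "ultrafilter_on (Lam A) (Reg A) U" by simp
      have "Lam A \<in> U" "Lam A \<in> Reg A" using uf_props(1,2)[OF u] by auto
      then show "U \<in> \<Union>{{U. ultrafilter_on (Lam A) (Reg A) U \<and> a \<in> U} | a. a \<in> Reg A}"
        using u by blast
    qed
  qed
  then show ?thesis unfolding stone_space_def by simp
qed

lemma basic_open: "finite Q \<Longrightarrow> q \<in> D Q A \<Longrightarrow> openin (profin_top A) {\<theta> \<in> Profin A. \<theta> Q = q}"
  unfolding profin_top_def by (rule topology_generated_by_Basis) blast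

lemma open_QF:
  assumes fin: "finite Q"
  shows "openin (profin_top A) {\<theta> \<in> Profin A. \<theta> Q \<in> F}"
proof -
  have "{\<theta> \<in> Profin A. \<theta> Q \<in> F} = \<Union>((\<lambda>q. {\<theta> \<in> Profin A. \<theta> Q = q}) ` (F \<inter> D Q A))"
    using Profin_D[OF _ fin] by blast
  moreover have "openin (profin_top A) (\<Union>((\<lambda>q. {\<theta> \<in> Profin A. \<theta> Q = q}) ` (F \<inter> D Q A)))"
    using basic_open[OF fin] by (intro openin_Union) blast
  ultimately show ?thesis by simp
qed

lemma cont_PhiM: "continuous_map (profin_top A) (stone_space (Lam A) (Reg A)) (PhiM A)"
  unfolding stone_space_def
proof (rule continuous_on_generated_topo)
  fix V assume "V \<in> {{U. ultrafilter_on (Lam A) (Reg A) U \<and> a \<in> U} | a. a \<in> Reg A}"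
  then obtain a where a: "a \<in> Reg A" and V: "V = {U. ultrafilter_on (Lam A) (Reg A) U \<and> a \<in> U}" by blast
  then obtain Q F where r: "rep A Q F a" using Reg_iff by blast
  have fin: "finite Q" using r by (simp add: rep_def)
  have "PhiM A -` V \<inter> topspace (profin_top A) = {\<theta> \<in> Profin A. \<theta> Q \<in> F}"
  proof -
    have "\<theta> \<in> PhiM A -` V \<longleftrightarrow> \<theta> Q \<in> F" if th: "\<theta> \<in> Profin A" for \<theta>
      using PhiM_uf[OF th] memb_iff[OF th r] a unfolding V PhiM_def by auto
    then show ?thesis unfolding topspace_P by blast
  qed
  then show "openin (profin_top A) (PhiM A -` V \<inter> topspace (profin_top A))"
    using open_QF[OF fin] by simp
next
  show "PhiM A ` topspace (profin_top A) \<subseteq> \<Union>{{U. ultrafilter_on (Lam A) (Reg A) U \<and> a \<in> U} | a. a \<in> Reg A}"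
    using topspace_S[of A] PhiM_uf unfolding topspace_P stone_space_def by auto
qed

lemma cont_PsiM: "continuous_map (stone_space (Lam A) (Reg A)) (profin_top A) (PsiM A)"
  unfolding profin_top_def
proof (rule continuous_on_generated_topo)
  fix V assume "V \<in> {{\<theta> \<in> Profin A. \<theta> Q = q} | Q q. finite Q \<and> q \<in> D Q A}"
  then obtain Q q where fin: "finite Q" and q: "q \<in> D Q A" and V: "V = {\<theta> \<in> Profin A. \<theta> Q = q}" by blast
  have qi: "q \<in> interp Q A" using D_sub[OF fin] q by blast
  have "PsiM A -` V \<inter> topspace (stone_space (Lam A) (Reg A)) = {U. ultrafilter_on (Lam A) (Reg A) U \<and> Lq A Q q \<in> U}"
  proof -
    have "U \<in> PsiM A -` V \<longleftrightarrow> Lq A Q q \<in> U" if U: "ultrafilter_on (Lam A) (Reg A) U" for U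
      using PsiM_Profin[OF U] uf_rep[OF U rep_Lq[OF fin qi]] unfolding V by auto
    then show ?thesis unfolding topspace_S by blast
  qed
  moreover have "Lq A Q q \<in> Reg A" using rep_Lq[OF fin qi] Reg_iff by blast
  ultimately show "openin (stone_space (Lam A) (Reg A)) (PsiM A -` V \<inter> topspace (stone_space (Lam A) (Reg A)))"
    unfolding stone_space_def by (auto intro: topology_generated_by_Basis)
next
  have "PsiM A ` topspace (stone_space (Lam A) (Reg A)) \<subseteq> Profin A"
    unfolding topspace_S using PsiM_Profin by blast
  then show "PsiM A ` topspace (stone_space (Lam A) (Reg A)) \<subseteq> \<Union>{{\<theta> \<in> Profin A. \<theta> Q = q} | Q q. finite Q \<and> q \<in> D Q A}"
    using topspace_P[of A] unfolding profin_top_def by simp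
qed

lemma homeo: "profin_top A homeomorphic_space stone_space (Lam A) (Reg A)"
  unfolding homeomorphic_space_def homeomorphic_maps_def
proof (intro exI conjI ballI)
  show "continuous_map (profin_top A) (stone_space (Lam A) (Reg A)) (PhiM A)" by (rule cont_PhiM)
  show "continuous_map (stone_space (Lam A) (Reg A)) (profin_top A) (PsiM A)" by (rule cont_PsiM)
  show "PsiM A (PhiM A x) = x" if "x \<in> topspace (profin_top A)" for x
    using that PsiM_PhiM unfolding topspace_P by blast
  show "PhiM A (PsiM A y) = y" if "y \<in> topspace (stone_space (Lam A) (Reg A))" for y
    using that PhiM_PsiM unfolding topspace_S by blast
qed




definition cl :: "ty \<Rightarrow> lterm set set \<Rightarrow> (nat set \<Rightarrow> sem) set" where
  "cl A a = {\<theta> \<in> Profin A. memb A \<theta> a}"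

lemma cl_rep: "rep A Q F a \<Longrightarrow> cl A a = {\<theta> \<in> Profin A. \<theta> Q \<in> F}"
  unfolding cl_def using memb_iff by blast

lemma cl_clopen:
  assumes a: "a \<in> Reg A"
  shows "openin (profin_top A) (cl A a) \<and> closedin (profin_top A) (cl A a)"
proof -
  obtain Q F where r: "rep A Q F a" using a Reg_iff by blast
  have fin: "finite Q" using r by (simp add: rep_def)
  have "topspace (profin_top A) - cl A a = {\<theta> \<in> Profin A. \<theta> Q \<in> - F}"
    unfolding topspace_P cl_rep[OF r] by blast
  moreover have "openin (profin_top A) {\<theta> \<in> Profin A. \<theta> Q \<in> - F}" by (rule open_QF[OF fin])
  ultimately have "openin (profin_top A) (topspace (profin_top A) - cl A a)" by simp
  moreover have "openin (profin_top A) (cl A a)" unfolding cl_rep[OF r] by (rule open_QF[OF fin])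
  moreover have "cl A a \<subseteq> topspace (profin_top A)" unfolding topspace_P cl_def by blast
  ultimately show ?thesis unfolding closedin_def by blast
qed

lemma cl_Int: "a \<in> Reg A \<Longrightarrow> b \<in> Reg A \<Longrightarrow> a \<inter> b \<in> Reg A \<and> cl A (a \<inter> b) = cl A a \<inter> cl A b"
proof -
  assume "a \<in> Reg A" "b \<in> Reg A"
  then obtain Q1 F1 Q2 F2 where "rep A Q1 F1 a" "rep A Q2 F2 b" using Reg_iff by blast
  then obtain Q Fa Fb where ra: "rep A Q Fa a" and rb: "rep A Q Fb b" using common_rep by blast
  show ?thesis using rep_Int[OF ra rb] cl_rep[OF ra] cl_rep[OF rb] cl_rep[OF rep_Int[OF ra rb]] Reg_iff by blast
qed

lemma cl_Un: "a \<in> Reg A \<Longrightarrow> b \<in> Reg A \<Longrightarrow> a \<union> b \<in> Reg A \<and> cl A (a \<union> b) = cl A a \<union> cl A b"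
proof -
  assume "a \<in> Reg A" "b \<in> Reg A"
  then obtain Q1 F1 Q2 F2 where "rep A Q1 F1 a" "rep A Q2 F2 b" using Reg_iff by blast
  then obtain Q Fa Fb where ra: "rep A Q Fa a" and rb: "rep A Q Fb b" using common_rep by blast
  show ?thesis using rep_Un[OF ra rb] cl_rep[OF ra] cl_rep[OF rb] cl_rep[OF rep_Un[OF ra rb]] Reg_iff by blast
qed

lemma cl_Diff: "a \<in> Reg A \<Longrightarrow> cl A (Lam A - a) = Profin A - cl A a"
proof -
  assume "a \<in> Reg A"
  then obtain Q F where r: "rep A Q F a" using Reg_iff by blast
  have fin: "finite Q" using r by (simp add: rep_def)
  show ?thesis unfolding cl_rep[OF r] cl_rep[OF rep_Diff[OF r]] using Profin_interp[OF _ fin] by blast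
qed

lemma cl_empty: "{} \<in> Reg A \<and> cl A {} = {}"
  using rep_empty[of "{}" A] cl_rep[OF rep_empty[of "{}" A]] Reg_iff by auto

definition tc :: "ty \<Rightarrow> lterm set \<Rightarrow> nat set \<Rightarrow> sem" where
  "tc A c = (\<lambda>Q. if finite Q then den Q c else undefined)"

lemma tc_Profin: "c \<in> Lam A \<Longrightarrow> tc A c \<in> Profin A"
  unfolding Profin_def
proof (intro CollectI conjI allI impI)
  fix Q :: "nat set" assume c: "c \<in> Lam A" and "finite Q"
  then show "tc A c Q \<in> D Q A" unfolding tc_def D_def by simp
next
  fix Q :: "nat set" assume "infinite Q" then show "tc A c Q = undefined" by (simp add: tc_def)
next
  fix Q Q' f assume c: "c \<in> Lam A" and fin: "finite Q" and fin': "finite Q'" and ps: "psurj Q Q' f"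
  have "f \<subseteq> Q \<times> Q'" using ps by (simp add: psurj_def)
  from den_fund[OF fin fin' this c] show "(tc A c Q, tc A c Q') \<in> lrel Q Q' f A"
    using fin fin' by (simp add: tc_def)
qed

lemma tc_cl: "c \<in> Lam A \<Longrightarrow> a \<in> Reg A \<Longrightarrow> tc A c \<in> cl A a \<longleftrightarrow> c \<in> a"
proof -
  assume c: "c \<in> Lam A" and "a \<in> Reg A"
  then obtain Q F where r: "rep A Q F a" using Reg_iff by blast
  have fin: "finite Q" using r by (simp add: rep_def)
  show ?thesis unfolding cl_rep[OF r] using tc_Profin[OF c] r c fin by (auto simp: rep_def tc_def)
qed

lemma cl_inj: "inj_on (cl A) (Reg A)"
proof (rule inj_onI)
  fix a b assume a: "a \<in> Reg A" and b: "b \<in> Reg A" and eq: "cl A a = cl A b"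
  have "a \<subseteq> Lam A" "b \<subseteq> Lam A" using a b by (auto simp: Reg_iff rep_def)
  moreover have "c \<in> a \<longleftrightarrow> c \<in> b" if "c \<in> Lam A" for c
    using tc_cl[OF that a] tc_cl[OF that b] eq by simp
  ultimately show "a = b" by blast
qed

lemma compact_P: "compact_space (profin_top A)"
proof -
  define P where "P = product_topology (\<lambda>Q. discrete_topology (D Q A)) {Q. finite Q}"
  have tsP: "topspace P = (\<Pi>\<^sub>E Q\<in>{Q. finite Q}. D Q A)" unfolding P_def by simp
  have fD: "finite (D Q A)" if "finite Q" for Q
    using finite_subset[OF D_sub[OF that] interp_finite[OF that]] .
  have cP: "compact_space P" unfolding P_def compact_space_product_topology
    using fD by (auto simp: compact_space_discrete_topology)
  have sub: "Profin A \<subseteq> topspace P"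
    unfolding tsP using Profin_D by (auto simp: PiE_iff extensional_def Profin_def)
  have proj: "openin P {x \<in> topspace P. x Q \<in> {q}}" if "finite Q" "q \<in> D Q A" for Q q
  proof -
    have "continuous_map P (discrete_topology (D Q A)) (\<lambda>x. x Q)"
      unfolding P_def using that by (intro continuous_map_product_projection) simp
    then show ?thesis by (rule openin_continuous_map_preimage) (use that in simp)
  qed
  have "openin P (topspace P - Profin A)"
  proof (subst openin_subopen, intro ballI)
    fix \<theta> assume th: "\<theta> \<in> topspace P - Profin A"
    then have D1: "\<forall>Q. finite Q \<longrightarrow> \<theta> Q \<in> D Q A" and D2: "\<forall>Q. \<not> finite Q \<longrightarrow> \<theta> Q = undefined"
      unfolding tsP by (auto simp: PiE_iff extensional_def)
    then obtain Q Q' f where fin: "finite Q" and fin': "finite Q'" and ps: "psurj Q Q' f"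
      and nrel: "(\<theta> Q, \<theta> Q') \<notin> lrel Q Q' f A"
      using th unfolding Profin_def by blast
    define T where "T = {x \<in> topspace P. x Q \<in> {\<theta> Q}} \<inter> {x \<in> topspace P. x Q' \<in> {\<theta> Q'}}"
    have "openin P T" unfolding T_def using proj fin fin' D1 by (intro openin_Int) auto
    moreover have "\<theta> \<in> T" unfolding T_def using th by auto
    moreover have "T \<subseteq> topspace P - Profin A"
    proof
      fix x assume x: "x \<in> T"
      have "x \<notin> Profin A"
      proof
        assume "x \<in> Profin A"
        then have "(x Q, x Q') \<in> lrel Q Q' f A" using Profin_rel fin fin' ps by blast
        then show False using x nrel unfolding T_def by auto
      qed
      then show "x \<in> topspace P - Profin A" using x unfolding T_def by auto
    qed
    ultimately show "\<exists>T. openin P T \<and> \<theta> \<in> T \<and> T \<subseteq> topspace P - Profin A" by blast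
  qed
  then have "closedin P (Profin A)" using sub unfolding closedin_def by blast
  then have "compactin P (Profin A)" using closedin_compact_space[OF cP] by blast
  then have cS: "compact_space (subtopology P (Profin A))" by (rule compact_space_subtopology)
  have tsS: "topspace (subtopology P (Profin A)) = Profin A" using sub by auto
  have "continuous_map (subtopology P (Profin A)) (profin_top A) id"
    unfolding profin_top_def
  proof (rule continuous_on_generated_topo)
    fix V assume "V \<in> {{\<theta> \<in> Profin A. \<theta> Q = q} | Q q. finite Q \<and> q \<in> D Q A}"
    then obtain Q q where fin: "finite Q" and q: "q \<in> D Q A" and V: "V = {\<theta> \<in> Profin A. \<theta> Q = q}" by blast
    have "id -` V \<inter> topspace (subtopology P (Profin A)) = {x \<in> topspace P. x Q \<in> {q}} \<inter> Profin A"
      unfolding tsS V using sub by auto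
    then show "openin (subtopology P (Profin A)) (id -` V \<inter> topspace (subtopology P (Profin A)))"
      unfolding openin_subtopology using proj[OF fin q] by blast
  next
    show "id ` topspace (subtopology P (Profin A)) \<subseteq> \<Union>{{\<theta> \<in> Profin A. \<theta> Q = q} | Q q. finite Q \<and> q \<in> D Q A}"
      using topspace_P[of A] tsS unfolding profin_top_def by simp
  qed
  from image_compactin[OF cS[unfolded compact_space_def] this]
  show ?thesis unfolding compact_space_def tsS topspace_P by simp
qed

lemma local_basis:
  assumes "openin (profin_top A) W"
  shows "\<theta> \<in> W \<Longrightarrow> \<exists>a\<in>Reg A. \<theta> \<in> cl A a \<and> cl A a \<subseteq> W"
proof -
  have "generate_topology_on {{\<theta> \<in> Profin A. \<theta> Q = q} | Q q. finite Q \<and> q \<in> D Q A} W"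
    using assms unfolding profin_top_def by (rule openin_topology_generated_by)
  then show "\<theta> \<in> W \<Longrightarrow> \<exists>a\<in>Reg A. \<theta> \<in> cl A a \<and> cl A a \<subseteq> W"
  proof (induction arbitrary: \<theta>)
    case Empty then show ?case by simp
  next
    case (Int a b)
    then obtain x y where "x \<in> Reg A" "\<theta> \<in> cl A x" "cl A x \<subseteq> a" "y \<in> Reg A" "\<theta> \<in> cl A y" "cl A y \<subseteq> b"
      by blast
    then show ?case using cl_Int[of x A y] by (intro bexI[of _ "x \<inter> y"]) auto
  next
    case (UN K)
    then obtain k where "k \<in> K" "\<theta> \<in> k" by blast
    then show ?case using UN.IH by blast
  next
    case (Basis s)
    then obtain Q q where fin: "finite Q" and q: "q \<in> D Q A" and s: "s = {\<theta> \<in> Profin A. \<theta> Q = q}" by blast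
    have qi: "q \<in> interp Q A" using D_sub[OF fin] q by blast
    have "cl A (Lq A Q q) = s" unfolding cl_rep[OF rep_Lq[OF fin qi]] s by blast
    moreover have "Lq A Q q \<in> Reg A" using rep_Lq[OF fin qi] Reg_iff by blast
    ultimately show ?case using Basis.prems by blast
  qed
qed

lemma cl_Union: "finite G \<Longrightarrow> G \<subseteq> Reg A \<Longrightarrow> \<Union>G \<in> Reg A \<and> cl A (\<Union>G) = \<Union>(cl A ` G)"
proof (induction G rule: finite_induct)
  case empty then show ?case using cl_empty by simp
next
  case (insert a G)
  then have "a \<in> Reg A" "\<Union>G \<in> Reg A" "cl A (\<Union>G) = \<Union>(cl A ` G)" by auto
  then show ?case using cl_Un[of a A "\<Union>G"] by simp
qed

lemma cl_surj:
  assumes o: "openin (profin_top A) S" and c: "closedin (profin_top A) S"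
  shows "S \<in> cl A ` Reg A"
proof -
  have cS: "compactin (profin_top A) S" using closedin_compact_space[OF compact_P c] .
  define U where "U = cl A ` {a \<in> Reg A. cl A a \<subseteq> S}"
  have "\<forall>V\<in>U. openin (profin_top A) V" unfolding U_def using cl_clopen by blast
  moreover have "S \<subseteq> \<Union>U"
  proof
    fix \<theta> assume "\<theta> \<in> S"
    then obtain a where "a \<in> Reg A" "\<theta> \<in> cl A a" "cl A a \<subseteq> S" using local_basis[OF o] by blast
    then show "\<theta> \<in> \<Union>U" unfolding U_def by blast
  qed
  ultimately obtain F where F: "finite F" "F \<subseteq> U" "S \<subseteq> \<Union>F"
    using cS unfolding compactin_def by meson
  then obtain G where G: "G \<subseteq> {a \<in> Reg A. cl A a \<subseteq> S}" "finite G" "F = cl A ` G"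
    unfolding U_def by (meson finite_subset_image)
  then have "\<Union>G \<in> Reg A" "cl A (\<Union>G) = \<Union>F" using cl_Union[of G A] by auto
  moreover have "\<Union>F = S" using F(3) G by blast
  ultimately show ?thesis by (metis image_eqI)
qed

theorem mainTheorem7:
  fixes A :: ty
  shows "profin_top A homeomorphic_space stone_space (Lam A) (Reg A)
    \<and> (\<exists>\<phi>. bij_betw \<phi> (Reg A) {S. openin (profin_top A) S \<and> closedin (profin_top A) S}
          \<and> (\<forall>a\<in>Reg A. \<forall>b\<in>Reg A. \<phi> (a \<inter> b) = \<phi> a \<inter> \<phi> b)
          \<and> (\<forall>a\<in>Reg A. \<phi> (Lam A - a) = topspace (profin_top A) - \<phi> a))"
proof (intro conjI exI)
  show "profin_top A homeomorphic_space stone_space (Lam A) (Reg A)" by (rule homeo)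
  show "bij_betw (cl A) (Reg A) {S. openin (profin_top A) S \<and> closedin (profin_top A) S}"
    unfolding bij_betw_def using cl_inj cl_clopen cl_surj by blast
  show "\<forall>a\<in>Reg A. \<forall>b\<in>Reg A. cl A (a \<inter> b) = cl A a \<inter> cl A b" using cl_Int by blast
  show "\<forall>a\<in>Reg A. cl A (Lam A - a) = topspace (profin_top A) - cl A a" using cl_Diff topspace_P by blast
qed



end
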